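(* Let $\mathcal E,\mathcal D$ be sets, $K,\eta\in\mathbb N$, $\psi:\mathcal E^*\times[K]\to\mathbb R^\eta$ a function, and $\mathcal G$ a finite nonempty set of functions $\{+,-,0\}^K\to\mathcal D$. Then $\mathrm{Ndim}(\mathcal F_{\psi,\mathcal G})\le2\eta\log(8eK)+2\log|\mathcal G|=O(\eta\log K+\log|\mathcal G|)$.
   Context: $\mathcal E^*=\bigcup_{n\ge1}\mathcal E^n$. For $\vec w\in\mathbb R^\eta$ and $g\in\mathcal G$, $f_{\vec w,g}(P)=g(\mathrm{sign}(\psi(P,1)\cdot\vec w),\dots,\mathrm{sign}(\psi(P,K)\cdot\vec w))$, with sign values $+,-,0$; $\mathcal F_{\psi,\mathcal G}=\{f_{\vec w,g}:\vec w\in\mathbb R^\eta,g\in\mathcal G\}$. Natarajan dimension: a finite $\mathcal P\subseteq\mathcal E^*$ is shattered by $\mathcal F$ if there are $f^0,f^1:\mathcal E^*\to\mathcal D$ with $f^0(P)\ne f^1(P)$ on $\mathcal P$ such that for every $B\subseteq\mathcal P$ some $f\in\mathcal F$ equals $f^0$ on $B$ and $f^1$ on $\mathcal P\setminus B$; $\mathrm{Ndim}$ is the largest size of a shattered set. Logarithms are base 2. *)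

theory Defs
  imports Complex_Main "HOL-Library.Extended_Nat"
begin

datatype sgn = Pos | Neg | Zer

definition sgn_of :: "real \<Rightarrow> sgn" where
  "sgn_of x = (if x > 0 then Pos else if x < 0 then Neg else Zer)"

definition Estar :: "'e list set" where
  "Estar = {xs. xs \<noteq> []}"

text \<open>Vectors in R^eta are functions nat => real; only coordinates i < eta matter.
  psi P k i is the i-th coordinate of psi(P,k), for k in {1..K}, i < eta.\<close>
definition dotp :: "nat \<Rightarrow> (nat \<Rightarrow> real) \<Rightarrow> (nat \<Rightarrow> real) \<Rightarrow> real" where
  "dotp eta u v = (\<Sum>i<eta. u i * v i)"

text \<open>Sign vectors in {+,-,0}^K are lists of length K; entry j is the sign for index j+1.\<close>
definition f_wg :: "nat \<Rightarrow> nat \<Rightarrow> ('e list \<Rightarrow> nat \<Rightarrow> nat \<Rightarrow> real)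
    \<Rightarrow> (nat \<Rightarrow> real) \<Rightarrow> (sgn list \<Rightarrow> 'd) \<Rightarrow> 'e list \<Rightarrow> 'd" where
  "f_wg K eta psi w g P = g (map (\<lambda>k. sgn_of (dotp eta (psi P k) w)) [1..<K+1])"

definition F_class :: "nat \<Rightarrow> nat \<Rightarrow> ('e list \<Rightarrow> nat \<Rightarrow> nat \<Rightarrow> real)
    \<Rightarrow> (sgn list \<Rightarrow> 'd) set \<Rightarrow> ('e list \<Rightarrow> 'd) set" where
  "F_class K eta psi G = {f_wg K eta psi w g | w g. g \<in> G}"

definition N_shatters :: "('e list \<Rightarrow> 'd) set \<Rightarrow> 'e list set \<Rightarrow> bool" where
  "N_shatters F PP \<longleftrightarrow> finite PP \<and> PP \<subseteq> Estar \<and>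
     (\<exists>f0 f1. (\<forall>P\<in>PP. f0 P \<noteq> f1 P) \<and>
        (\<forall>B. B \<subseteq> PP \<longrightarrow> (\<exists>f\<in>F. (\<forall>P\<in>B. f P = f0 P) \<and> (\<forall>P\<in>PP - B. f P = f1 P))))"

definition Ndim :: "('e list \<Rightarrow> 'd) set \<Rightarrow> enat" where
  "Ndim F = Sup {enat (card PP) | PP. N_shatters F PP}"

end

theory Submission
  imports Defs "HOL-Library.FuncSet"
begin

fun NN :: "nat \<Rightarrow> nat \<Rightarrow> nat" where
  "NN 0 k = 1"
| "NN (Suc m) 0 = 1"
| "NN (Suc m) (Suc k) = NN m (Suc k) + 2 * NN m k"

lemma NN_0 [simp]: "NN m 0 = 1" by (cases m) auto

lemma NN_sum: "NN m k = (\<Sum>i\<le>k. (m choose i) * 2^i)"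
proof (induction m k rule: NN.induct)
  case (1 k)
  then show ?case by (simp add: sum.atMost_shift)
next
  case (2 m)
  then show ?case by simp
next
  case (3 m k)
  have "(\<Sum>i\<le>Suc k. (Suc m choose i) * 2^i) = 1 + (\<Sum>i\<le>k. (Suc m choose Suc i) * 2^Suc i)"
    by (subst sum.atMost_Suc_shift) simp
  also have "\<dots> = 1 + 2 * (\<Sum>i\<le>k. (m choose i) * 2^i) + (\<Sum>i\<le>k. (m choose Suc i) * 2^Suc i)"
    by (simp add: sum.distrib sum_distrib_left algebra_simps)
  also have "(\<Sum>i\<le>Suc k. (m choose i) * 2^i) = 1 + (\<Sum>i\<le>k. (m choose Suc i) * 2^Suc i)"
    by (subst sum.atMost_Suc_shift) simp
  ultimately show ?case using 3 by simp
qed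

definition dot :: "nat set \<Rightarrow> (nat\<Rightarrow>real) \<Rightarrow> (nat\<Rightarrow>real) \<Rightarrow> real" where
  "dot I u w = (\<Sum>i\<in>I. u i * w i)"

definition pats :: "nat set \<Rightarrow> 'j set \<Rightarrow> ('j \<Rightarrow> nat \<Rightarrow> real) \<Rightarrow> ('j \<Rightarrow> sgn) set" where
  "pats I J U = {restrict (\<lambda>j. sgn_of (dot I (U j) w)) J | w. True}"

lemma NN_mono: "NN m k \<le> NN (Suc m) k"
  by (cases k) auto

lemma sgn_univ: "(UNIV :: sgn set) = {Pos, Neg, Zer}"
  using sgn.exhaust by auto

lemma finite_sgn [simp]: "finite (UNIV :: sgn set)"
  by (simp add: sgn_univ)

lemma finite_pats: "finite J \<Longrightarrow> finite (pats I J U)"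
proof -
  assume "finite J"
  have "pats I J U \<subseteq> PiE J (\<lambda>_. UNIV)" unfolding pats_def by auto
  moreover have "finite (PiE J (\<lambda>_. UNIV :: sgn set))"
    using \<open>finite J\<close> by (intro finite_PiE) auto
  ultimately show ?thesis by (rule finite_subset)
qed

lemma sgn_comb:
  fixes t p q :: real
  assumes "0 < t" "t < 1" "sgn_of p = sgn_of q"
  shows "sgn_of (t*p + (1-t)*q) = sgn_of p"
proof -
  have "p > 0 \<and> q > 0 \<or> p < 0 \<and> q < 0 \<or> p = 0 \<and> q = 0"
    using assms(3) unfolding sgn_of_def by (auto split: if_splits)
  moreover
  { assume "p > 0" "q > 0"
    hence "t*p + (1-t)*q > 0" using assms by (simp add: add_pos_pos)
    hence ?thesis using \<open>p>0\<close> unfolding sgn_of_def by simp }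
  moreover
  { assume "p < 0" "q < 0"
    hence "t*p + (1-t)*q < 0" using assms
      by (simp add: add_neg_neg mult_pos_neg)
    hence ?thesis using \<open>p<0\<close> unfolding sgn_of_def by simp }
  ultimately show ?thesis by auto
qed

lemma dot_comb: "dot I u (\<lambda>i. t * w1 i + (1-t) * w2 i) = t * dot I u w1 + (1-t) * dot I u w2"
proof -
  have "dot I u (\<lambda>i. t * w1 i + (1-t) * w2 i) = (\<Sum>i\<in>I. t*(u i*w1 i) + (1-t)*(u i*w2 i))"
    unfolding dot_def by (rule sum.cong) (auto simp: algebra_simps)
  also have "\<dots> = t * dot I u w1 + (1-t) * dot I u w2"
    unfolding dot_def by (simp add: sum.distrib sum_distrib_left)
  finally show ?thesis .
qed

lemma convex_split:
  assumes eq: "\<forall>j\<in>J. sgn_of (dot I (U j) w1) = sgn_of (dot I (U j) w2)"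
    and ne: "sgn_of (dot I h w1) \<noteq> sgn_of (dot I h w2)"
  shows "\<exists>w. (\<forall>j\<in>J. sgn_of (dot I (U j) w) = sgn_of (dot I (U j) w1)) \<and> dot I h w = 0"
proof -
  define a where "a = dot I h w1"
  define b where "b = dot I h w2"
  show ?thesis
  proof (cases "a = 0 \<or> b = 0")
    case True
    then show ?thesis using eq unfolding a_def b_def by metis
  next
    case False
    have ab: "a > 0 \<and> b < 0 \<or> a < 0 \<and> b > 0"
      using ne False unfolding a_def[symmetric] b_def[symmetric] sgn_of_def
      by (auto split: if_splits)
    define t where "t = b / (b - a)"
    have t01: "0 < t" "t < 1" using ab unfolding t_def
      by (auto simp: divide_simps)
    define w where "w = (\<lambda>i. t * w1 i + (1-t) * w2 i)"
    have "dot I h w = t * a + (1-t) * b" unfolding w_def a_def b_def by (rule dot_comb)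
    also have "\<dots> = 0" using ab unfolding t_def by (auto simp: field_simps)
    finally have h0: "dot I h w = 0" .
    have "\<forall>j\<in>J. sgn_of (dot I (U j) w) = sgn_of (dot I (U j) w1)"
      unfolding w_def dot_comb using eq t01 by (simp add: sgn_comb)
    with h0 show ?thesis by blast
  qed
qed

lemma dot_elim:
  assumes "finite I" "i0 \<in> I" "h i0 \<noteq> 0" "dot I h w = 0"
  shows "dot I v w = dot (I - {i0}) (\<lambda>i. v i - v i0 * h i / h i0) w"
proof -
  let ?I = "I - {i0}"
  have s1: "dot I v w = v i0 * w i0 + dot ?I v w" for v
    unfolding dot_def using assms(1,2) by (simp add: sum.remove)
  have wi0: "w i0 = - dot ?I h w / h i0"
    using s1[of h] assms(3,4) by (simp add: field_simps)
  have "dot ?I (\<lambda>i. v i - v i0 * h i / h i0) w = dot ?I v w - (v i0 / h i0) * dot ?I h w"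
    unfolding dot_def by (simp add: sum_subtractf sum_distrib_left algebra_simps)
  then show ?thesis using s1[of v] wi0 by simp
qed

lemma card_pats:
  "finite J \<Longrightarrow> finite I \<Longrightarrow> card (pats I J U) \<le> NN (card J) (card I)"
proof (induction J arbitrary: I U rule: finite_induct)
  case empty
  have "pats I {} U \<subseteq> {\<lambda>_. undefined}" unfolding pats_def by auto
  from card_mono[OF _ this] show ?case by simp
next
  case (insert a J)
  define sig where "sig w = restrict (\<lambda>j. sgn_of (dot I (U j) w)) J" for w
  define P where "P = pats I J U"
  have P_eq: "P = range sig" unfolding P_def pats_def sig_def by auto
  have A_eq: "pats I (insert a J) U = (\<lambda>w. (sig w)(a := sgn_of (dot I (U a) w))) ` UNIV"
  proof -
    have "restrict (\<lambda>j. sgn_of (dot I (U j) w)) (insert a J) = (sig w)(a := sgn_of (dot I (U a) w))" for w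
      using insert(2) unfolding sig_def by (auto simp: restrict_def fun_eq_iff)
    then show ?thesis unfolding pats_def by auto
  qed
  have finP: "finite P" unfolding P_def using insert(1) by (rule finite_pats)
  have IHP: "card P \<le> NN (card J) (card I)" unfolding P_def using insert by blast
  show ?case
  proof (cases "\<forall>i\<in>I. U a i = 0")
    case True
    then have "\<And>w. dot I (U a) w = 0" unfolding dot_def by simp
    then have "pats I (insert a J) U \<subseteq> (\<lambda>\<sigma>. \<sigma>(a:=Zer)) ` P"
      unfolding A_eq P_eq by (auto simp: sgn_of_def)
    then have "card (pats I (insert a J) U) \<le> card ((\<lambda>\<sigma>. \<sigma>(a:=Zer)) ` P)"
      using finP by (intro card_mono) auto
    also have "\<dots> \<le> card P" using finP by (rule card_image_le)
    also have "\<dots> \<le> NN (card J) (card I)" by (rule IHP)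
    also have "\<dots> \<le> NN (Suc (card J)) (card I)" by (rule NN_mono)
    finally show ?thesis using insert by simp
  next
    case False
    then obtain i0 where i0: "i0 \<in> I" "U a i0 \<noteq> 0" by blast
    define U' where "U' j i = U j i - U j i0 * U a i / U a i0" for j i
    define Z where "Z = {\<sigma>. \<exists>w. \<sigma> = sig w \<and> dot I (U a) w = 0}"
    have ZP: "Z \<subseteq> pats (I - {i0}) J U'"
    proof
      fix \<sigma> assume "\<sigma> \<in> Z"
      then obtain w where w: "\<sigma> = sig w" "dot I (U a) w = 0" unfolding Z_def by blast
      have "\<And>j. dot I (U j) w = dot (I - {i0}) (U' j) w"
        unfolding U'_def using dot_elim[OF insert(4) i0 w(2)] by blast
      then have "\<sigma> = restrict (\<lambda>j. sgn_of (dot (I - {i0}) (U' j) w)) J"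
        using w(1) unfolding sig_def by simp
      then show "\<sigma> \<in> pats (I - {i0}) J U'" unfolding pats_def by blast
    qed
    have finZ: "finite Z"
      using finite_subset[OF ZP finite_pats[OF insert(1)]] .
    have cZ: "card Z \<le> NN (card J) (card (I - {i0}))"
    proof -
      have "card Z \<le> card (pats (I - {i0}) J U')"
        using ZP finite_pats[OF insert(1)] by (rule card_mono[rotated])
      also have "\<dots> \<le> NN (card J) (card (I - {i0}))"
        using insert(3)[of "I - {i0}" U'] insert(4) by simp
      finally show ?thesis .
    qed
    have cI: "card I = Suc (card (I - {i0}))"
      using i0(1) insert(4) by (metis card_Suc_Diff1)
    define pick where "pick \<sigma> = (if \<sigma> \<in> Z then Zer else
        (SOME s. \<exists>w. sig w = \<sigma> \<and> sgn_of (dot I (U a) w) = s))" for \<sigma>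
    have sub: "pats I (insert a J) U \<subseteq>
      (\<lambda>\<sigma>. \<sigma>(a := pick \<sigma>)) ` P \<union> (\<lambda>\<sigma>. \<sigma>(a:=Pos)) ` Z \<union> (\<lambda>\<sigma>. \<sigma>(a:=Neg)) ` Z"
    proof
      fix f assume "f \<in> pats I (insert a J) U"
      then obtain w where f: "f = (sig w)(a := sgn_of (dot I (U a) w))" unfolding A_eq by blast
      let ?s = "sgn_of (dot I (U a) w)"
      show "f \<in> (\<lambda>\<sigma>. \<sigma>(a := pick \<sigma>)) ` P \<union> (\<lambda>\<sigma>. \<sigma>(a:=Pos)) ` Z \<union> (\<lambda>\<sigma>. \<sigma>(a:=Neg)) ` Z"
      proof (cases "sig w \<in> Z")
        case True
        show ?thesis
        proof (cases ?s)
          case Zer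
          then have "f = (\<lambda>\<sigma>. \<sigma>(a := pick \<sigma>)) (sig w)" using True unfolding f pick_def by simp
          moreover have "sig w \<in> P" unfolding P_eq by simp
          ultimately have "f \<in> (\<lambda>\<sigma>. \<sigma>(a := pick \<sigma>)) ` P"
            by (intro rev_image_eqI[of "sig w" P f "\<lambda>\<sigma>. \<sigma>(a := pick \<sigma>)"])
          then show ?thesis by (rule UnI1[OF UnI1])
        next
          case Pos
          then have e: "f = (\<lambda>\<sigma>. \<sigma>(a := Pos)) (sig w)" unfolding f by simp
          have "f \<in> (\<lambda>\<sigma>. \<sigma>(a := Pos)) ` Z"
            by (rule rev_image_eqI[of "sig w" Z f "\<lambda>\<sigma>. \<sigma>(a := Pos)", OF True e])
          then show ?thesis by (rule UnI1[OF UnI2])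
        next
          case Neg
          then have e: "f = (\<lambda>\<sigma>. \<sigma>(a := Neg)) (sig w)" unfolding f by simp
          have "f \<in> (\<lambda>\<sigma>. \<sigma>(a := Neg)) ` Z"
            by (rule rev_image_eqI[of "sig w" Z f "\<lambda>\<sigma>. \<sigma>(a := Neg)", OF True e])
          then show ?thesis by (rule UnI2)
        qed
      next
        case False
        have "\<exists>w'. sig w' = sig w \<and> sgn_of (dot I (U a) w') = pick (sig w)"
        proof -
          have "\<exists>w'. sig w' = sig w \<and> sgn_of (dot I (U a) w') =
              (SOME s. \<exists>w'. sig w' = sig w \<and> sgn_of (dot I (U a) w') = s)"
            by (rule someI_ex) blast
          then show ?thesis unfolding pick_def using False by simp
        qed
        then obtain w' where w': "sig w' = sig w" "sgn_of (dot I (U a) w') = pick (sig w)" by blast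
        have "pick (sig w) = ?s"
        proof (rule ccontr)
          assume ne: "pick (sig w) \<noteq> ?s"
          have eqJ: "\<forall>j\<in>J. sgn_of (dot I (U j) w) = sgn_of (dot I (U j) w')"
          proof
            fix j assume "j \<in> J"
            then show "sgn_of (dot I (U j) w) = sgn_of (dot I (U j) w')"
              using fun_cong[OF w'(1), of j] unfolding sig_def by simp
          qed
          have ne2: "sgn_of (dot I (U a) w) \<noteq> sgn_of (dot I (U a) w')" using ne w'(2) by simp
          from convex_split[OF eqJ ne2]
          obtain w'' where w'': "\<forall>j\<in>J. sgn_of (dot I (U j) w'') = sgn_of (dot I (U j) w)"
            "dot I (U a) w'' = 0" by auto
          have "sig w'' = sig w" unfolding sig_def using w''(1) by (auto simp: restrict_def)
          then have "sig w = sig w'' \<and> dot I (U a) w'' = 0" using w''(2) by simp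
          then have "sig w \<in> Z" unfolding Z_def by blast
          with False show False by blast
        qed
        then have "f = (\<lambda>\<sigma>. \<sigma>(a := pick \<sigma>)) (sig w)" unfolding f by simp
        moreover have "sig w \<in> P" unfolding P_eq by simp
        ultimately have "f \<in> (\<lambda>\<sigma>. \<sigma>(a := pick \<sigma>)) ` P"
            by (intro rev_image_eqI[of "sig w" P f "\<lambda>\<sigma>. \<sigma>(a := pick \<sigma>)"])
        then show ?thesis by (rule UnI1[OF UnI1])
      qed
    qed
    have "card (pats I (insert a J) U) \<le>
      card ((\<lambda>\<sigma>. \<sigma>(a := pick \<sigma>)) ` P \<union> (\<lambda>\<sigma>. \<sigma>(a:=Pos)) ` Z \<union> (\<lambda>\<sigma>. \<sigma>(a:=Neg)) ` Z)"
      using finP finZ by (intro card_mono[OF _ sub]) auto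
    also have "\<dots> \<le> card P + card Z + card Z"
    proof -
      have "card ((\<lambda>\<sigma>. \<sigma>(a := pick \<sigma>)) ` P) \<le> card P" using finP by (rule card_image_le)
      moreover have "card ((\<lambda>\<sigma>. \<sigma>(a:=Pos)) ` Z) \<le> card Z" using finZ by (rule card_image_le)
      moreover have "card ((\<lambda>\<sigma>. \<sigma>(a:=Neg)) ` Z) \<le> card Z" using finZ by (rule card_image_le)
      moreover note card_Un_le[of "(\<lambda>\<sigma>. \<sigma>(a := pick \<sigma>)) ` P \<union> (\<lambda>\<sigma>. \<sigma>(a:=Pos)) ` Z" "(\<lambda>\<sigma>. \<sigma>(a:=Neg)) ` Z"]
      moreover note card_Un_le[of "(\<lambda>\<sigma>. \<sigma>(a := pick \<sigma>)) ` P" "(\<lambda>\<sigma>. \<sigma>(a:=Pos)) ` Z"]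
      ultimately show ?thesis by linarith
    qed
    also have "\<dots> \<le> NN (card J) (Suc (card (I - {i0}))) + 2 * NN (card J) (card (I - {i0}))"
      using IHP cZ cI by simp
    also have "\<dots> = NN (card (insert a J)) (card I)"
      using insert(1,2) cI by simp
    finally show ?thesis .
  qed
qed

lemma sum_choose_bound:
  assumes "1 \<le> k" "k \<le> m"
  shows "real (\<Sum>i\<le>k. (m choose i) * 2^i) \<le> (2 * exp 1 * real m / real k) ^ k"
proof -
  define r where "r = real m / real k"
  define q where "q = real k / real m"
  have r1: "r \<ge> 1" unfolding r_def using assms by simp
  have q0: "q \<ge> 0" unfolding q_def by simp
  have rq: "r * q = 1" unfolding r_def q_def using assms by simp
  have trm: "real (m choose i) * 2^i \<le> 2^k * r^k * (real (m choose i) * q^i)" if "i \<le> k" for i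
  proof -
    have "r^k * q^i = r^(k-i) * (r*q)^i"
      using that by (simp add: power_mult_distrib power_add[symmetric])
    also have "\<dots> = r^(k-i)" using rq by simp
    also have "\<dots> \<ge> 1" using r1 by simp
    finally have a: "r^k * q^i \<ge> 1" .
    have b: "(2::real)^i \<le> 2^k" using that by (simp add: power_increasing)
    have "real (m choose i) * 2^i \<le> real (m choose i) * 2^k" using b by (simp add: mult_left_mono)
    also have "\<dots> \<le> real (m choose i) * 2^k * (r^k * q^i)" using a
      by (simp add: mult_left_mono[of 1 _ "real (m choose i) * 2^k", simplified])
    finally show ?thesis by (simp add: algebra_simps)
  qed
  have S: "(\<Sum>i\<le>k. real (m choose i) * q^i) \<le> exp 1 ^ k"
  proof -
    have "(\<Sum>i\<le>k. real (m choose i) * q^i) \<le> (\<Sum>i\<le>m. real (m choose i) * q^i)"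
      using assms q0 by (intro sum_mono2) auto
    also have "(\<Sum>i\<le>m. real (m choose i) * q^i) = (q + 1)^m"
      by (simp add: binomial_ring)
    also have "(q + 1)^m \<le> exp q ^ m"
      using q0 by (intro power_mono) (auto simp: add.commute)
    also have "exp q ^ m = exp 1 ^ k"
      using assms unfolding q_def by (simp add: exp_of_nat_mult[symmetric])
    finally show ?thesis .
  qed
  have "real (\<Sum>i\<le>k. (m choose i) * 2^i) = (\<Sum>i\<le>k. real (m choose i) * 2^i)" by simp
  also have "\<dots> \<le> (\<Sum>i\<le>k. 2^k * r^k * (real (m choose i) * q^i))"
    by (rule sum_mono) (use trm in auto)
  also have "\<dots> = 2^k * r^k * (\<Sum>i\<le>k. real (m choose i) * q^i)"
    by (simp add: sum_distrib_left)
  also have "\<dots> \<le> 2^k * r^k * exp 1 ^ k"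
    using S r1 by (intro mult_left_mono) auto
  also have "\<dots> = (2 * exp 1 * real m / real k) ^ k"
    unfolding r_def by (simp add: power_mult_distrib[symmetric] algebra_simps)
  finally show ?thesis .
qed
lemma ln2_half: "ln (2::real) \<ge> 1/2"
proof -
  have "exp (1/2::real) ^ 2 = exp 1" by (simp add: exp_of_nat_mult[symmetric])
  also have "\<dots> \<le> 3" by (rule exp_le)
  finally have "exp (1/2::real) ^ 2 \<le> 2^2" by simp
  then have "exp (1/2::real) \<le> 2" by (rule power2_le_imp_le) simp
  then show ?thesis by (metis exp_gt_zero exp_le_cancel_iff exp_ln zero_less_numeral)
qed

lemma log2_le: assumes "x > 0" shows "log 2 x \<le> x/2 + 2"
proof -
  have "ln (x/4) \<le> x/4 - 1" using assms by (intro ln_le_minus_one) simp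
  moreover have "ln (x/4) = ln x - 2 * ln 2" using assms
    by (simp add: ln_div ln_realpow[of 2 2, simplified, symmetric])
  ultimately have lx: "ln x \<le> 2 * ln 2 + (x/4 - 1)" by simp
  have l2: "ln (2::real) > 0" by simp
  have "log 2 x = ln x / ln 2" by (simp add: log_def)
  also have "\<dots> \<le> (2 * ln 2 + (x/4 - 1)) / ln 2" using lx l2 by (simp add: divide_right_mono)
  also have "\<dots> = 2 + (x/4 - 1) / ln 2" using l2 by (simp add: field_simps)
  also have "\<dots> \<le> x/2 + 2"
  proof (cases "x/4 - 1 \<le> 0")
    case True
    then have "(x/4 - 1) / ln 2 \<le> 0" using l2 by (simp add: divide_nonpos_pos)
    then show ?thesis using assms by linarith
  next
    case False
    have "(x/4 - 1) / ln 2 \<le> (x/4 - 1) / (1/2)" using False ln2_half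
      by (intro divide_left_mono) auto
    moreover have "(x/4 - 1) / (1/2) = x/2 - 2" by simp
    ultimately show ?thesis using assms by linarith
  qed
  finally show ?thesis .
qed

lemma final_arith:
  fixes d K eta :: nat and g :: real
  assumes K: "K \<ge> 1" and g: "g \<ge> 1" and H: "2^d \<le> g * real (NN (d*K) eta)"
  shows "real d \<le> 2 * real eta * log 2 (8 * exp 1 * real K) + 2 * log 2 g"
proof -
  define L where "L = log 2 (8 * exp 1 * real K)"
  have e1: "exp 1 \<ge> (1::real)" by simp
  have K1: "real K \<ge> 1" using K by simp
  have "1 * 1 \<le> exp 1 * real K" using e1 K1 by (intro mult_mono) auto
  then have eK: "exp 1 * real K \<ge> 1" by simp
  have eK': "real K * exp 1 \<ge> 1" using eK by (simp add: mult.commute)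
  have L1: "L \<ge> 1" unfolding L_def using eK' by (subst le_log_iff) auto
  have l4: "log 2 (4::real) = 2"
  proof -
    have "log 2 ((2::real)^2) = 2" by (subst log_nat_power) auto
    then show ?thesis by simp
  qed
  have e8: "8 * exp 1 * real K = 4 * (2 * exp 1 * real K)" by simp
  have pos: "0 < 2 * exp 1 * real K" using eK' by simp
  have e4: "log 2 (4 * (2 * exp 1 * real K)) = log 2 4 + log 2 (2 * exp 1 * real K)"
    using pos by (intro log_mult_pos) auto
  then have "log 2 (8 * exp 1 * real K) = log 2 4 + log 2 (2 * exp 1 * real K)"
    unfolding e8 .
  then have L2: "L = 2 + log 2 (2 * exp 1 * real K)" unfolding L_def using l4 by simp
  have lg: "log 2 g \<ge> 0" using g by simp
  have dlog: "log 2 (2^d) = real d" by (simp add: log_nat_power)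
  show ?thesis
  proof (cases "eta = 0")
    case True
    then have "2^d \<le> g" using H by simp
    then have "log 2 (2^d) \<le> log 2 g" using g by (subst log_le_cancel_iff) auto
    then show ?thesis using dlog lg True by simp
  next
    case False
    show ?thesis
    proof (cases "d * K < eta")
      case True
      have "real d \<le> real (d*K)" using K by (simp add: mult_le_cancel_left1)
      also have "\<dots> \<le> real eta" using True by (metis less_imp_le of_nat_le_iff of_nat_mult)
      also have "\<dots> \<le> 2 * real eta * L" 
      proof -
        have a: "real eta \<le> real eta * L" using mult_left_mono[OF L1, of "real eta"] by simp
        have b: "0 \<le> real eta * L" using L1 by simp
        show ?thesis using a b by linarith
      qed
      finally show ?thesis using lg unfolding L_def by simp
    next
      case dK: False
      have d1: "d \<ge> 1" using dK False by (cases d) auto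
      have "real (NN (d*K) eta) \<le> (2 * exp 1 * real (d*K) / real eta) ^ eta"
        unfolding NN_sum using False dK by (intro sum_choose_bound) auto
      then have "g * real (NN (d*K) eta) \<le> g * (2 * exp 1 * real (d*K) / real eta) ^ eta"
        using g by (intro mult_left_mono) auto
      then have H2: "(2::real)^d \<le> g * (2 * exp 1 * real (d*K) / real eta) ^ eta"
        using H by linarith
      define x where "x = real d / real eta"
      have x0: "x > 0" unfolding x_def using d1 False by simp
      have Bx: "2 * exp 1 * real (d*K) / real eta = (2 * exp 1 * real K) * x"
        unfolding x_def by simp
      have p2: "0 < 2 * exp 1 * real K" using eK' by simp
      have Bp: "0 < (2 * exp 1 * real K) * x" using p2 x0 by simp
      have "log 2 (2^d) \<le> log 2 (g * (2 * exp 1 * real (d*K) / real eta) ^ eta)"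
        using H2 Bp g unfolding Bx by (subst log_le_cancel_iff) auto
      also have "\<dots> = log 2 g + real eta * (log 2 (2 * exp 1 * real K) + log 2 x)"
        unfolding Bx using g Bp p2 x0 by (simp add: log_mult_pos log_nat_power)
      finally have "log 2 (2^d) \<le> log 2 g + real eta * (log 2 (2 * exp 1 * real K) + log 2 x)" .
      then have "real d \<le> log 2 g + real eta * (log 2 (2 * exp 1 * real K) + log 2 x)" using dlog by linarith
      then have "real d \<le> log 2 g + real eta * (L - 2 + log 2 x)" using L2 by simp
      moreover have "real eta * log 2 x \<le> real eta * (x/2 + 2)"
        using log2_le[OF x0] by (simp add: mult_left_mono)
      moreover have "real eta * x = real d" unfolding x_def using False by simp
      ultimately have "real d \<le> log 2 g + real eta * L + real d / 2"
        by (simp add: algebra_simps)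
      then show ?thesis unfolding L_def by simp
    qed
  qed
qed

lemma shatter_bound:
  fixes K eta :: nat
    and psi :: "'e list \<Rightarrow> nat \<Rightarrow> nat \<Rightarrow> real"
    and G :: "(sgn list \<Rightarrow> 'd) set"
  assumes K: "K \<ge> 1" and finG: "finite G" and neG: "G \<noteq> {}"
    and sh: "N_shatters (F_class K eta psi G) PP"
  shows "real (card PP) \<le> 2 * real eta * log 2 (8 * exp 1 * real K) + 2 * log 2 (real (card G))"
proof -
  define F where "F = F_class K eta psi G"
  from sh have finPP: "finite PP" and
    ex: "\<exists>f0 f1. (\<forall>P\<in>PP. f0 P \<noteq> f1 P) \<and>
        (\<forall>B. B \<subseteq> PP \<longrightarrow> (\<exists>f\<in>F. (\<forall>P\<in>B. f P = f0 P) \<and> (\<forall>P\<in>PP - B. f P = f1 P)))"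
    unfolding N_shatters_def F_def by auto
  then obtain f0 f1 where f01: "\<forall>P\<in>PP. f0 P \<noteq> f1 P"
    and fB: "\<And>B. B \<subseteq> PP \<Longrightarrow> \<exists>f\<in>F. (\<forall>P\<in>B. f P = f0 P) \<and> (\<forall>P\<in>PP - B. f P = f1 P)"
    by blast
  define ch where "ch B = (SOME f. f \<in> F \<and> (\<forall>P\<in>B. f P = f0 P) \<and> (\<forall>P\<in>PP - B. f P = f1 P))" for B
  have ch: "ch B \<in> F \<and> (\<forall>P\<in>B. ch B P = f0 P) \<and> (\<forall>P\<in>PP - B. ch B P = f1 P)" if "B \<subseteq> PP" for B
  proof -
    have "\<exists>f. f \<in> F \<and> (\<forall>P\<in>B. f P = f0 P) \<and> (\<forall>P\<in>PP - B. f P = f1 P)"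
      using fB[OF that] by blast
    then show ?thesis unfolding ch_def by (rule someI_ex)
  qed
  define rr where "rr B = restrict (ch B) PP" for B
  have inj: "inj_on rr (Pow PP)"
  proof (rule inj_onI)
    fix B1 B2 assume B1: "B1 \<in> Pow PP" and B2: "B2 \<in> Pow PP" and eq: "rr B1 = rr B2"
    show "B1 = B2"
    proof (rule ccontr)
      assume "B1 \<noteq> B2"
      then obtain x where x: "x \<in> B1 \<and> x \<notin> B2 \<or> x \<in> B2 \<and> x \<notin> B1" by blast
      then have xP: "x \<in> PP" using B1 B2 by blast
      have "rr B1 x = ch B1 x" "rr B2 x = ch B2 x" unfolding rr_def using xP by auto
      then have "ch B1 x = ch B2 x" using eq by simp
      moreover have "ch B1 x \<noteq> ch B2 x"
        using x ch[of B1] ch[of B2] B1 B2 xP f01 by auto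
      ultimately show False by simp
    qed
  qed
  define I where "I = {..<eta}"
  define J where "J = PP \<times> {1..K}"
  define U where "U j = psi (fst j) (snd j)" for j
  define Phi where "Phi gs = restrict (\<lambda>P. (fst gs) (map (\<lambda>k. (snd gs) (P,k)) [1..<K+1])) PP"
    for gs :: "(sgn list \<Rightarrow> 'd) \<times> ((('e list) \<times> nat) \<Rightarrow> sgn)"
  have img: "rr ` Pow PP \<subseteq> Phi ` (G \<times> pats I J U)"
  proof
    fix y assume "y \<in> rr ` Pow PP"
    then obtain B where B: "B \<subseteq> PP" and y: "y = rr B" by blast
    have "ch B \<in> F" using ch[OF B] by blast
    then obtain w g where g: "g \<in> G" and chB: "ch B = f_wg K eta psi w g"
      unfolding F_def F_class_def by blast
    define \<sigma> where "\<sigma> = restrict (\<lambda>j. sgn_of (dot I (U j) w)) J"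
    have sp: "\<sigma> \<in> pats I J U" unfolding \<sigma>_def pats_def by blast
    have "y = Phi (g, \<sigma>)"
    proof
      fix P
      show "y P = Phi (g, \<sigma>) P"
      proof (cases "P \<in> PP")
        case True
        have meq: "map (\<lambda>k. \<sigma> (P,k)) [1..<K+1] = map (\<lambda>k. sgn_of (dotp eta (psi P k) w)) [1..<K+1]"
          using True unfolding \<sigma>_def J_def U_def I_def dot_def dotp_def
          by (intro map_cong) auto
        have y1: "y P = g (map (\<lambda>k. sgn_of (dotp eta (psi P k) w)) [1..<K+1])"
          using True unfolding y rr_def chB f_wg_def by simp
        have y2: "Phi (g, \<sigma>) P = g (map (\<lambda>k. \<sigma> (P,k)) [1..<K+1])"
          using True unfolding Phi_def by simp
        show ?thesis unfolding y1 y2 meq ..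
      next
        case False
        then show ?thesis unfolding y rr_def Phi_def by simp
      qed
    qed
    then show "y \<in> Phi ` (G \<times> pats I J U)" using g sp by blast
  qed
  have finJ: "finite J" unfolding J_def using finPP by simp
  have finpats: "finite (pats I J U)" using finJ by (rule finite_pats)
  have "(2::nat) ^ card PP = card (Pow PP)" using finPP by (simp add: card_Pow)
  also have "\<dots> = card (rr ` Pow PP)" using inj by (simp add: card_image)
  also have "\<dots> \<le> card (Phi ` (G \<times> pats I J U))"
    using img finG finpats by (intro card_mono) auto
  also have "\<dots> \<le> card (G \<times> pats I J U)" by (rule card_image_le) (use finG finpats in auto)
  also have "\<dots> = card G * card (pats I J U)" by (rule card_cartesian_product)
  also have "\<dots> \<le> card G * NN (card J) (card I)"
    using card_pats[OF finJ, of I U] unfolding I_def by simp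
  also have "card J = card PP * K" unfolding J_def by (simp add: card_cartesian_product)
  also have "card I = eta" unfolding I_def by simp
  finally have H: "(2::nat) ^ card PP \<le> card G * NN (card PP * K) eta" .
  have H': "(2::real) ^ card PP \<le> real (card G) * real (NN (card PP * K) eta)"
    using H by (metis of_nat_le_iff of_nat_mult of_nat_numeral of_nat_power)
  have g1: "real (card G) \<ge> 1" using finG neG by (simp add: Suc_le_eq card_gt_0_iff)
  show ?thesis by (rule final_arith[OF K g1 H'])
qed

theorem theorem11:
  fixes K eta :: nat
    and psi :: "'e list \<Rightarrow> nat \<Rightarrow> nat \<Rightarrow> real"
    and G :: "(sgn list \<Rightarrow> 'd) set"
  assumes "K \<ge> 1"
    and "finite G" and "G \<noteq> {}"
    and "\<forall>g\<in>G. \<forall>s. length s \<noteq> K \<longrightarrow> g s = undefined"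
  shows "Ndim (F_class K eta psi G) \<noteq> \<infinity> \<and>
         real (the_enat (Ndim (F_class K eta psi G)))
           \<le> 2 * real eta * log 2 (8 * exp 1 * real K) + 2 * log 2 (real (card G))"
proof -
  define Bd where "Bd = 2 * real eta * log 2 (8 * exp 1 * real K) + 2 * log 2 (real (card G))"
  have Lpos: "log 2 (8 * exp 1 * real K) \<ge> 0"
  proof -
    have "real K \<ge> 1" using assms(1) by simp
    moreover have "exp 1 \<ge> (1::real)" by simp
    ultimately have "1 * 1 \<le> exp 1 * real K" by (intro mult_mono) auto
    then have "1 \<le> 8 * exp 1 * real K" by simp
    moreover have "real K * exp 1 > 0" using \<open>real K \<ge> 1\<close> by simp
    ultimately show ?thesis by (subst le_log_iff) auto
  qed
  have g1: "real (card G) \<ge> 1" using assms(2,3) by (simp add: Suc_le_eq card_gt_0_iff)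
  have B0: "Bd \<ge> 0" unfolding Bd_def using Lpos g1 by simp
  define n where "n = nat \<lfloor>Bd\<rfloor>"
  have nB: "real n \<le> Bd" unfolding n_def using B0 by simp
  have le: "x \<le> enat n" if xin: "x \<in> {enat (card PP) | PP. N_shatters (F_class K eta psi G) PP}" for x
  proof -
    obtain PP where x: "x = enat (card PP)" and sh: "N_shatters (F_class K eta psi G) PP"
      using xin by blast
    have "real (card PP) \<le> Bd" unfolding Bd_def using shatter_bound[OF assms(1-3) sh] .
    then have "card PP \<le> n" unfolding n_def by linarith
    then show ?thesis unfolding x by simp
  qed
  have Nle: "Ndim (F_class K eta psi G) \<le> enat n"
    unfolding Ndim_def by (rule Sup_least) (use le in blast)
  then obtain m where m: "Ndim (F_class K eta psi G) = enat m" "m \<le> n"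
    by (cases "Ndim (F_class K eta psi G)") auto
  have "real m \<le> Bd" using m(2) nB by linarith
  then show ?thesis using m(1) unfolding Bd_def by simp
qed

end
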